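(* Assume $\mathbb P(T(X)>1-\alpha)>0$, that the law of $X$ is non-atomic, that for every $C\in\mathcal I$ the random variable $p_C(X)$ has a continuous, non-atomic distribution, and that for every distinct $C_1,C_2\in\mathcal I$ any nontrivial linear combination of $p_{C_1}(X)$ and $p_{C_2}(X)$ has a non-atomic distribution. Then: (1) $\mu^*=\min\{\mu\ge 0: G(D^\mu,C^\mu)\le 0\}$ exists and is finite; (2) $(D^{\mu^*},C^{\mu^*})$ is an optimal solution of the problem of maximizing $\Pi(D,C)$ over all $D:\mathcal X\to\{0,1\}$, $C:\mathcal X\to\mathcal I$ subject to $G(D,C)\le 0$.
   Context: Let $(X,Y)\sim P_{XY}$ on $\mathcal X\times\mathcal Y$, $\alpha\in(0,1)$. $\mathcal I$ is a finite collection of subsets of $\mathcal Y$ enumerated in a fixed lexicographic order, and $w:\mathcal I\to(0,B)$ is a bounded positive weight. For $x\in\mathcal X$, $C\in\mathcal I$ write $p_C(x)=\mathbb P(Y\in C\mid X=x)$, and for $\mu\ge0$ let $\ell_{x,C}(\mu)=w(C)p_C(x)+\mu(p_C(x)-(1-\alpha))$ and $\mathcal U_x(\mu)=\max_{C\in\mathcal I}\ell_{x,C}(\mu)$. $C^\mu(x)$ is a maximizer of $\ell_{x,C}(\mu)$ over $C\in\mathcal I$, ties broken in favor of the largest $w(C)$ and then the smallest index in the ordering; $D^\mu(x)=\mathbb 1\{\mathcal U_x(\mu)\ge 0\}$. $T(x)=\max_{C\in\mathcal I}p_C(x)$. For $D:\mathcal X\to\{0,1\}$, $C:\mathcal X\to\mathcal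 I$: $\Pi(D,C)=\mathbb E[w(C(X))p_{C(X)}(X)D(X)]$ and $G(D,C)=\mathbb E[(1-p_{C(X)}(X)-\alpha)D(X)]$. *)

theory Defs
  imports "HOL-Probability.Probability"
begin

text \<open>Conditional probability p_C(x) = P(Y in C | X = x), given by a Markov kernel K
  (regular conditional law of Y given X = x).\<close>
definition pC :: "('x \<Rightarrow> 'y measure) \<Rightarrow> 'y set \<Rightarrow> 'x \<Rightarrow> real" where
  "pC K C x = measure (K x) C"

definition ell :: "('x \<Rightarrow> 'y measure) \<Rightarrow> ('y set \<Rightarrow> real) \<Rightarrow> real \<Rightarrow> 'x \<Rightarrow> 'y set \<Rightarrow> real \<Rightarrow> real" where
  "ell K w \<alpha> x C \<mu> = w C * pC K C x + \<mu> * (pC K C x - (1 - \<alpha>))"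

definition Ux :: "('x \<Rightarrow> 'y measure) \<Rightarrow> 'y set list \<Rightarrow> ('y set \<Rightarrow> real) \<Rightarrow> real \<Rightarrow> real \<Rightarrow> 'x \<Rightarrow> real" where
  "Ux K Is w \<alpha> \<mu> x = Max ((\<lambda>C. ell K w \<alpha> x C \<mu>) ` set Is)"

definition maxidx :: "('x \<Rightarrow> 'y measure) \<Rightarrow> 'y set list \<Rightarrow> ('y set \<Rightarrow> real) \<Rightarrow> real \<Rightarrow> real \<Rightarrow> 'x \<Rightarrow> nat set" where
  "maxidx K Is w \<alpha> \<mu> x = {i. i < length Is \<and> ell K w \<alpha> x (Is ! i) \<mu> = Ux K Is w \<alpha> \<mu> x}"

definition Cmu :: "('x \<Rightarrow> 'y measure) \<Rightarrow> 'y set list \<Rightarrow> ('y set \<Rightarrow> real) \<Rightarrow> real \<Rightarrow> real \<Rightarrow> 'x \<Rightarrow> 'y set" where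
  "Cmu K Is w \<alpha> \<mu> x =
     (let S = maxidx K Is w \<alpha> \<mu> x;
          wm = Max ((\<lambda>i. w (Is ! i)) ` S)
      in Is ! Min {i \<in> S. w (Is ! i) = wm})"

definition Dmu :: "('x \<Rightarrow> 'y measure) \<Rightarrow> 'y set list \<Rightarrow> ('y set \<Rightarrow> real) \<Rightarrow> real \<Rightarrow> real \<Rightarrow> 'x \<Rightarrow> bool" where
  "Dmu K Is w \<alpha> \<mu> x = (Ux K Is w \<alpha> \<mu> x \<ge> 0)"

definition Tx :: "('x \<Rightarrow> 'y measure) \<Rightarrow> 'y set list \<Rightarrow> 'x \<Rightarrow> real" where
  "Tx K Is x = Max ((\<lambda>C. pC K C x) ` set Is)"

definition Pi_obj :: "'x measure \<Rightarrow> ('x \<Rightarrow> 'y measure) \<Rightarrow> ('y set \<Rightarrow> real) \<Rightarrow> ('x \<Rightarrow> bool) \<Rightarrow> ('x \<Rightarrow> 'y set) \<Rightarrow> real" where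
  "Pi_obj M K w D C = (\<integral>x. w (C x) * pC K (C x) x * of_bool (D x) \<partial>M)"

definition G_con :: "'x measure \<Rightarrow> ('x \<Rightarrow> 'y measure) \<Rightarrow> real \<Rightarrow> ('x \<Rightarrow> bool) \<Rightarrow> ('x \<Rightarrow> 'y set) \<Rightarrow> real" where
  "G_con M K \<alpha> D C = (\<integral>x. (1 - pC K (C x) x - \<alpha>) * of_bool (D x) \<partial>M)"

definition nonatomic :: "'x measure \<Rightarrow> bool" where
  "nonatomic M \<longleftrightarrow> (\<forall>A\<in>sets M. emeasure M A > 0 \<longrightarrow>
      (\<exists>B\<in>sets M. B \<subseteq> A \<and> 0 < emeasure M B \<and> emeasure M B < emeasure M A))"

definition nonatomic_rv :: "'x measure \<Rightarrow> ('x \<Rightarrow> real) \<Rightarrow> bool" where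
  "nonatomic_rv M f \<longleftrightarrow> (\<forall>t. measure M {x \<in> space M. f x = t} = 0)"

definition admissible :: "'x measure \<Rightarrow> 'y set list \<Rightarrow> ('x \<Rightarrow> bool) \<Rightarrow> ('x \<Rightarrow> 'y set) \<Rightarrow> bool" where
  "admissible M Is D C \<longleftrightarrow> D \<in> M \<rightarrow>\<^sub>M count_space UNIV \<and> C \<in> M \<rightarrow>\<^sub>M count_space UNIV
      \<and> (\<forall>x\<in>space M. C x \<in> set Is)"

end

theory Submission
  imports Defs
begin

lemma Ux_ge: "C \<in> set Is \<Longrightarrow> ell K w \<alpha> x C \<mu> \<le> Ux K Is w \<alpha> \<mu> x"
  unfolding Ux_def by (rule Max_ge) auto

lemma Ux_in: "Is \<noteq> [] \<Longrightarrow> \<exists>C\<in>set Is. ell K w \<alpha> x C \<mu> = Ux K Is w \<alpha> \<mu> x"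
proof -
  assume "Is \<noteq> []"
  then have "Ux K Is w \<alpha> \<mu> x \<in> (\<lambda>C. ell K w \<alpha> x C \<mu>) ` set Is"
    unfolding Ux_def by (intro Max_in) auto
  then show ?thesis by force
qed

lemma Cmu_props:
  assumes "Is \<noteq> []"
  shows "Cmu K Is w \<alpha> \<mu> x \<in> set Is \<and> ell K w \<alpha> x (Cmu K Is w \<alpha> \<mu> x) \<mu> = Ux K Is w \<alpha> \<mu> x"
proof -
  define S where "S = maxidx K Is w \<alpha> \<mu> x"
  define wm where "wm = Max ((\<lambda>i. w (Is ! i)) ` S)"
  obtain C where C: "C \<in> set Is" "ell K w \<alpha> x C \<mu> = Ux K Is w \<alpha> \<mu> x" using Ux_in[OF assms, where K=K and w=w and \<alpha>=\<alpha> and x=x and \<mu>=\<mu>] by blast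
  then obtain j where j: "j < length Is" "Is ! j = C" by (auto simp: in_set_conv_nth)
  have jS: "j \<in> S" using j C unfolding S_def maxidx_def by auto
  have finS: "finite S" unfolding S_def maxidx_def by auto
  have "wm \<in> (\<lambda>i. w (Is ! i)) ` S" unfolding wm_def using finS jS by (intro Max_in) auto
  then have ne: "{i \<in> S. w (Is ! i) = wm} \<noteq> {}" by force
  have "Min {i \<in> S. w (Is ! i) = wm} \<in> {i \<in> S. w (Is ! i) = wm}"
    using finS ne by (intro Min_in) auto
  then have "Min {i \<in> S. w (Is ! i) = wm} \<in> S" by blast
  moreover have "Cmu K Is w \<alpha> \<mu> x = Is ! Min {i \<in> S. w (Is ! i) = wm}"
    unfolding Cmu_def S_def wm_def Let_def by simp
  ultimately show ?thesis unfolding S_def maxidx_def by auto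
qed

lemma Cmu_unique:
  assumes "Is \<noteq> []" "C0 \<in> set Is" "\<forall>C\<in>set Is. C \<noteq> C0 \<longrightarrow> ell K w \<alpha> x C \<mu> < ell K w \<alpha> x C0 \<mu>"
  shows "Cmu K Is w \<alpha> \<mu> x = C0 \<and> Ux K Is w \<alpha> \<mu> x = ell K w \<alpha> x C0 \<mu>"
proof -
  have 1: "Cmu K Is w \<alpha> \<mu> x \<in> set Is" "ell K w \<alpha> x (Cmu K Is w \<alpha> \<mu> x) \<mu> = Ux K Is w \<alpha> \<mu> x"
    using Cmu_props[OF assms(1), where K=K and w=w and \<alpha>=\<alpha> and x=x and \<mu>=\<mu>] by auto
  have 2: "ell K w \<alpha> x C0 \<mu> \<le> Ux K Is w \<alpha> \<mu> x" using Ux_ge[OF assms(2)] .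
  show ?thesis using 1 2 assms(3) by force
qed


lemma eventually_real_gt: "eventually (\<lambda>n. A < real n) sequentially"
proof -
  obtain N :: nat where "A < real N" using reals_Archimedean2 by blast
  then show ?thesis by (intro eventually_sequentiallyI[of N]) auto
qed

locale setting =
  fixes M :: "'x measure" and N :: "'y measure" and K :: "'x \<Rightarrow> 'y measure"
    and Is :: "'y set list" and w :: "'y set \<Rightarrow> real" and B \<alpha> :: real
  assumes PS: "prob_space M"
    and Kmeas: "K \<in> M \<rightarrow>\<^sub>M prob_algebra N"
    and alpha: "\<alpha> \<in> {0<..<1}"
    and Isne: "Is \<noteq> []" and IsN: "set Is \<subseteq> sets N"
    and wb: "\<And>C. C \<in> set Is \<Longrightarrow> 0 < w C \<and> w C < B"
    and na1: "\<And>C. C \<in> set Is \<Longrightarrow> nonatomic_rv M (pC K C)"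
    and na2: "\<And>C1 C2 a b. C1 \<in> set Is \<Longrightarrow> C2 \<in> set Is \<Longrightarrow> C1 \<noteq> C2 \<Longrightarrow> (a, b) \<noteq> (0, 0) \<Longrightarrow>
           nonatomic_rv M (\<lambda>x. a * pC K C1 x + b * pC K C2 x)"
    and posT: "measure M {x \<in> space M. Tx K Is x > 1 - \<alpha>} > 0"
begin

interpretation prob_space M by (rule PS)

lemma pC_meas[measurable]: "pC K C \<in> borel_measurable M"
proof (cases "C \<in> sets N")
  case True
  then show ?thesis unfolding pC_def
    using measurable_compose[OF Kmeas measurable_measure_prob_algebra[OF True]] by simp
next
  case False
  have "\<And>x. x \<in> space M \<Longrightarrow> pC K C x = 0"
  proof -
    fix x assume "x \<in> space M"
    then have "K x \<in> space (prob_algebra N)" using measurable_space[OF Kmeas] by auto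
    then have "sets (K x) = sets N" by (simp add: space_prob_algebra)
    then show "pC K C x = 0" unfolding pC_def using False by (simp add: measure_notin_sets)
  qed
  then show ?thesis using measurable_cong[of M "pC K C" "\<lambda>_. 0"] by simp
qed

lemma pC_bounds: "x \<in> space M \<Longrightarrow> 0 \<le> pC K C x \<and> pC K C x \<le> 1"
proof -
  assume "x \<in> space M"
  then have "K x \<in> space (prob_algebra N)" using measurable_space[OF Kmeas] by auto
  then have "prob_space (K x)" by (simp add: space_prob_algebra)
  then show ?thesis unfolding pC_def using prob_space.prob_le_1 by auto
qed

lemma ell_meas[measurable]: "(\<lambda>x. ell K w \<alpha> x C \<mu>) \<in> borel_measurable M"
  unfolding ell_def by measurable

lemma Ux_meas[measurable]: "Ux K Is w \<alpha> \<mu> \<in> borel_measurable M"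
  unfolding Ux_def by (intro borel_measurable_Max) auto

lemma Tx_meas[measurable]: "Tx K Is \<in> borel_measurable M"
  unfolding Tx_def by (intro borel_measurable_Max) auto

lemma Dmu_meas[measurable]: "(\<lambda>x. of_bool (Dmu K Is w \<alpha> \<mu> x) :: real) \<in> borel_measurable M"
  unfolding Dmu_def by measurable

lemma Dmu_meas2: "Dmu K Is w \<alpha> \<mu> \<in> M \<rightarrow>\<^sub>M count_space UNIV"
  unfolding Dmu_def by measurable

lemma maxidx_meas: "maxidx K Is w \<alpha> \<mu> \<in> M \<rightarrow>\<^sub>M count_space (Pow {..<length Is})"
proof (subst measurable_count_space_eq2, simp, intro conjI ballI)
  show "maxidx K Is w \<alpha> \<mu> \<in> space M \<rightarrow> Pow {..<length Is}" unfolding maxidx_def by auto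
  fix a assume a: "a \<in> Pow {..<length Is}"
  have "maxidx K Is w \<alpha> \<mu> -` {a} \<inter> space M =
     {x \<in> space M. \<forall>i\<in>{..<length Is}. (i \<in> a) = (ell K w \<alpha> x (Is ! i) \<mu> = Ux K Is w \<alpha> \<mu> x)}"
    using a unfolding maxidx_def by auto
  also have "\<dots> \<in> sets M" by measurable
  finally show "maxidx K Is w \<alpha> \<mu> -` {a} \<inter> space M \<in> sets M" .
qed

definition Fsel :: "nat set \<Rightarrow> 'y set" where
  "Fsel S = Is ! Min {i \<in> S. w (Is ! i) = Max ((\<lambda>i. w (Is ! i)) ` S)}"

lemma Cmu_Fsel: "Cmu K Is w \<alpha> \<mu> x = Fsel (maxidx K Is w \<alpha> \<mu> x)"
  unfolding Cmu_def Fsel_def Let_def by simp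

lemma comp_maxidx_meas:
  assumes "\<And>S. (\<phi> S :: 'x \<Rightarrow> real) \<in> borel_measurable M"
  shows "(\<lambda>x. \<phi> (maxidx K Is w \<alpha> \<mu> x) x) \<in> borel_measurable M"
  by (rule measurable_compose_countable'[OF assms maxidx_meas]) (simp add: countable_finite)

lemma Cmu_meas: "Cmu K Is w \<alpha> \<mu> \<in> M \<rightarrow>\<^sub>M count_space UNIV"
proof -
  have "(\<lambda>x. Fsel (maxidx K Is w \<alpha> \<mu> x)) \<in> M \<rightarrow>\<^sub>M count_space UNIV"
    by (rule measurable_comp[OF maxidx_meas, unfolded comp_def]) simp
  then show ?thesis by (simp add: Cmu_Fsel[abs_def])
qed


definition hh :: "real \<Rightarrow> 'x \<Rightarrow> real" where
  "hh \<mu> x = (1 - pC K (Cmu K Is w \<alpha> \<mu> x) x - \<alpha>) * of_bool (Dmu K Is w \<alpha> \<mu> x)"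

lemma G_hh: "G_con M K \<alpha> (Dmu K Is w \<alpha> \<mu>) (Cmu K Is w \<alpha> \<mu>) = integral\<^sup>L M (hh \<mu>)"
  unfolding G_con_def hh_def by simp

lemma hh_meas[measurable]: "hh \<mu> \<in> borel_measurable M"
proof -
  have "(\<lambda>x. (\<lambda>S x. (1 - pC K (Fsel S) x - \<alpha>) * of_bool (Dmu K Is w \<alpha> \<mu> x)) (maxidx K Is w \<alpha> \<mu> x) x)
     \<in> borel_measurable M"
    by (rule comp_maxidx_meas) measurable
  then show ?thesis unfolding hh_def Cmu_Fsel[symmetric] by (simp add: hh_def[abs_def])
qed

lemma hh_bound: "x \<in> space M \<Longrightarrow> norm (hh \<mu> x) \<le> 1"
  using pC_bounds[of x "Cmu K Is w \<alpha> \<mu> x"] alpha unfolding hh_def by auto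

lemma ell_tendsto: "s \<longlonglongrightarrow> \<mu>0 \<Longrightarrow> (\<lambda>n. ell K w \<alpha> x C (s n)) \<longlonglongrightarrow> ell K w \<alpha> x C \<mu>0"
  unfolding ell_def by (intro tendsto_intros)

lemma stable:
  assumes gen1: "\<forall>C1\<in>set Is. \<forall>C2\<in>set Is. C1 \<noteq> C2 \<longrightarrow> ell K w \<alpha> x C1 \<mu>0 \<noteq> ell K w \<alpha> x C2 \<mu>0"
    and gen2: "\<forall>C\<in>set Is. ell K w \<alpha> x C \<mu>0 \<noteq> 0"
    and s: "s \<longlonglongrightarrow> \<mu>0"
  shows "eventually (\<lambda>n. hh (s n) x = hh \<mu>0 x) sequentially"
proof -
  define C0 where "C0 = Cmu K Is w \<alpha> \<mu>0 x"
  have C0: "C0 \<in> set Is" "ell K w \<alpha> x C0 \<mu>0 = Ux K Is w \<alpha> \<mu>0 x"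
    using Cmu_props[OF Isne, where K=K and w=w and \<alpha>=\<alpha> and x=x and \<mu>=\<mu>0] unfolding C0_def by auto
  have lt: "ell K w \<alpha> x C \<mu>0 < ell K w \<alpha> x C0 \<mu>0" if "C \<in> set Is" "C \<noteq> C0" for C
    using Ux_ge[OF that(1), where K=K and w=w and \<alpha>=\<alpha> and x=x and \<mu>=\<mu>0] C0 gen1 that by force
  have ev1: "eventually (\<lambda>n. \<forall>C\<in>set Is. C \<noteq> C0 \<longrightarrow> ell K w \<alpha> x C (s n) < ell K w \<alpha> x C0 (s n)) sequentially"
  proof (rule eventually_ball_finite, simp, intro ballI)
    fix C assume C: "C \<in> set Is"
    show "eventually (\<lambda>n. C \<noteq> C0 \<longrightarrow> ell K w \<alpha> x C (s n) < ell K w \<alpha> x C0 (s n)) sequentially"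
    proof (cases "C = C0")
      case False
      have "(\<lambda>n. ell K w \<alpha> x C0 (s n) - ell K w \<alpha> x C (s n)) \<longlonglongrightarrow> ell K w \<alpha> x C0 \<mu>0 - ell K w \<alpha> x C \<mu>0"
        by (intro tendsto_diff ell_tendsto s)
      moreover have "0 < ell K w \<alpha> x C0 \<mu>0 - ell K w \<alpha> x C \<mu>0" using lt[OF C False] by simp
      ultimately have "eventually (\<lambda>n. 0 < ell K w \<alpha> x C0 (s n) - ell K w \<alpha> x C (s n)) sequentially"
        by (rule order_tendstoD(1))
      then show ?thesis by (rule eventually_mono) simp
    qed simp
  qed
  have ev2: "eventually (\<lambda>n. (0 \<le> ell K w \<alpha> x C0 (s n)) = (0 \<le> ell K w \<alpha> x C0 \<mu>0)) sequentially"
  proof (cases "0 < ell K w \<alpha> x C0 \<mu>0")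
    case True
    from order_tendstoD(1)[OF ell_tendsto[OF s] True] show ?thesis
      by (rule eventually_mono) (use True in auto)
  next
    case False
    then have "ell K w \<alpha> x C0 \<mu>0 < 0" using gen2 C0(1) by force
    note neg = this
    from order_tendstoD(2)[OF ell_tendsto[OF s] neg] show ?thesis
      by (rule eventually_mono) (use neg in auto)
  qed
  show ?thesis
    using ev1 ev2
  proof (eventually_elim)
    case (elim n)
    from Cmu_unique[OF Isne C0(1) elim(1)]
    have "Cmu K Is w \<alpha> (s n) x = C0" "Ux K Is w \<alpha> (s n) x = ell K w \<alpha> x C0 (s n)" by auto
    then show ?case using elim(2) C0 unfolding hh_def Dmu_def C0_def by simp
  qed
qed


lemma AE_ne:
  assumes "nonatomic_rv M f" and [measurable]: "f \<in> borel_measurable M"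
  shows "AE x in M. f x \<noteq> t"
proof -
  have "{x\<in>space M. \<not> f x \<noteq> t} = {x\<in>space M. f x = t}" by auto
  moreover have "{x\<in>space M. f x = t} \<in> sets M" by measurable
  ultimately have "(AE x in M. f x \<noteq> t) \<longleftrightarrow> emeasure M {x\<in>space M. f x = t} = 0"
    by (intro AE_iff_measurable) auto
  moreover have "emeasure M {x\<in>space M. f x = t} = 0"
    using assms(1) unfolding nonatomic_rv_def by (simp add: emeasure_eq_measure)
  ultimately show ?thesis by simp
qed

lemma generic_AE:
  assumes mu0: "0 \<le> \<mu>0"
  shows "AE x in M. (\<forall>C1\<in>set Is. \<forall>C2\<in>set Is. C1 \<noteq> C2 \<longrightarrow> ell K w \<alpha> x C1 \<mu>0 \<noteq> ell K w \<alpha> x C2 \<mu>0)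
     \<and> (\<forall>C\<in>set Is. ell K w \<alpha> x C \<mu>0 \<noteq> 0)"
proof -
  have pair: "AE x in M. C1 \<noteq> C2 \<longrightarrow> ell K w \<alpha> x C1 \<mu>0 \<noteq> ell K w \<alpha> x C2 \<mu>0"
    if C: "C1 \<in> set Is" "C2 \<in> set Is" for C1 C2
  proof (cases "C1 = C2")
    case False
    have "w C1 + \<mu>0 > 0" using wb[OF C(1)] mu0 by auto
    then have "(w C1 + \<mu>0, - (w C2 + \<mu>0)) \<noteq> (0, 0)" by auto
    from na2[OF C False this]
    have "AE x in M. (w C1 + \<mu>0) * pC K C1 x + (- (w C2 + \<mu>0)) * pC K C2 x \<noteq> 0"
      by (rule AE_ne) measurable
    then show ?thesis
      by (rule eventually_mono) (auto simp: ell_def algebra_simps)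
  qed simp
  have A1: "AE x in M. \<forall>C2\<in>set Is. C1 \<noteq> C2 \<longrightarrow> ell K w \<alpha> x C1 \<mu>0 \<noteq> ell K w \<alpha> x C2 \<mu>0"
    if "C1 \<in> set Is" for C1
    by (rule AE_finite_allI[OF finite_set]) (rule pair[OF that])
  have A: "AE x in M. \<forall>C1\<in>set Is. \<forall>C2\<in>set Is. C1 \<noteq> C2 \<longrightarrow> ell K w \<alpha> x C1 \<mu>0 \<noteq> ell K w \<alpha> x C2 \<mu>0"
    by (rule AE_finite_allI[OF finite_set]) (rule A1)
  have B: "AE x in M. \<forall>C\<in>set Is. ell K w \<alpha> x C \<mu>0 \<noteq> 0"
  proof (rule AE_finite_allI[OF finite_set])
    fix C assume C: "C \<in> set Is"
    have pos: "w C + \<mu>0 > 0" using wb[OF C] mu0 by auto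
    from na1[OF C] have "AE x in M. pC K C x \<noteq> \<mu>0 * (1 - \<alpha>) / (w C + \<mu>0)"
      by (rule AE_ne) measurable
    then show "AE x in M. ell K w \<alpha> x C \<mu>0 \<noteq> 0"
    proof (rule eventually_mono)
      fix x assume ne: "pC K C x \<noteq> \<mu>0 * (1 - \<alpha>) / (w C + \<mu>0)"
      show "ell K w \<alpha> x C \<mu>0 \<noteq> 0"
      proof
        assume "ell K w \<alpha> x C \<mu>0 = 0"
        then have "(w C + \<mu>0) * pC K C x = \<mu>0 * (1 - \<alpha>)" unfolding ell_def by (simp add: algebra_simps)
        then have "pC K C x = \<mu>0 * (1 - \<alpha>) / (w C + \<mu>0)" using pos by (simp add: field_simps)
        with ne show False by simp
      qed
    qed
  qed
  from A B show ?thesis by eventually_elim simp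
qed

lemma g_cont:
  assumes "0 \<le> \<mu>0"
  shows "isCont (\<lambda>\<mu>. integral\<^sup>L M (hh \<mu>)) \<mu>0"
proof (rule continuous_at_sequentiallyI)
  fix s :: "nat \<Rightarrow> real" assume s: "s \<longlonglongrightarrow> \<mu>0"
  show "(\<lambda>n. integral\<^sup>L M (hh (s n))) \<longlonglongrightarrow> integral\<^sup>L M (hh \<mu>0)"
  proof (rule integral_dominated_convergence[where w="\<lambda>_. 1"])
    show "AE x in M. (\<lambda>n. hh (s n) x) \<longlonglongrightarrow> hh \<mu>0 x"
      using generic_AE[OF assms]
    proof (rule eventually_mono)
      fix x assume "(\<forall>C1\<in>set Is. \<forall>C2\<in>set Is. C1 \<noteq> C2 \<longrightarrow> ell K w \<alpha> x C1 \<mu>0 \<noteq> ell K w \<alpha> x C2 \<mu>0)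
         \<and> (\<forall>C\<in>set Is. ell K w \<alpha> x C \<mu>0 \<noteq> 0)"
      then show "(\<lambda>n. hh (s n) x) \<longlonglongrightarrow> hh \<mu>0 x"
        using stable[OF _ _ s] by (intro tendsto_eventually) auto
    qed
    show "\<And>n. AE x in M. norm (hh (s n) x) \<le> 1" using hh_bound by (intro AE_I2) auto
  qed auto
qed


lemma Tx_in: "\<exists>C\<in>set Is. pC K C x = Tx K Is x"
proof -
  have "Tx K Is x \<in> (\<lambda>C. pC K C x) ` set Is" unfolding Tx_def using Isne by (intro Max_in) auto
  then show ?thesis by force
qed

lemma Tx_ge: "C \<in> set Is \<Longrightarrow> pC K C x \<le> Tx K Is x"
  unfolding Tx_def by (rule Max_ge) auto

lemma hh_inf:
  assumes x: "x \<in> space M" and Tne: "Tx K Is x \<noteq> 1 - \<alpha>"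
  shows "eventually (\<lambda>n. hh (real n) x = (1 - \<alpha> - Tx K Is x) * of_bool (Tx K Is x > 1 - \<alpha>)) sequentially"
proof -
  define T where "T = Tx K Is x"
  define c where "c = 1 - \<alpha>"
  obtain Cs where Cs: "Cs \<in> set Is" "pC K Cs x = T" using Tx_in unfolding T_def by blast
  have ev1: "eventually (\<lambda>n. \<forall>C\<in>set Is. pC K C x < T \<longrightarrow> ell K w \<alpha> x C (real n) < ell K w \<alpha> x Cs (real n)) sequentially"
  proof (rule eventually_ball_finite, simp, intro ballI)
    fix C assume C: "C \<in> set Is"
    show "eventually (\<lambda>n. pC K C x < T \<longrightarrow> ell K w \<alpha> x C (real n) < ell K w \<alpha> x Cs (real n)) sequentially"
    proof (cases "pC K C x < T")
      case True
      show ?thesis using eventually_real_gt[of "(w C * pC K C x - w Cs * T) / (T - pC K C x)"]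
      proof (rule eventually_mono)
        fix n assume "(w C * pC K C x - w Cs * T) / (T - pC K C x) < real n"
        then have "w C * pC K C x - w Cs * T < real n * (T - pC K C x)"
          using True by (simp add: pos_divide_less_eq)
        then show "pC K C x < T \<longrightarrow> ell K w \<alpha> x C (real n) < ell K w \<alpha> x Cs (real n)"
          unfolding ell_def using Cs by (simp add: algebra_simps)
      qed
    qed simp
  qed
  have ev2: "eventually (\<lambda>n. \<forall>C\<in>set Is. pC K C x = T \<longrightarrow> (0 \<le> ell K w \<alpha> x C (real n)) = (T > c)) sequentially"
  proof (rule eventually_ball_finite, simp, intro ballI)
    fix C assume C: "C \<in> set Is"
    have wC: "0 < w C" using wb[OF C] by simp
    have T0: "0 \<le> T" using pC_bounds[OF x, of Cs] Cs by simp
    show "eventually (\<lambda>n. pC K C x = T \<longrightarrow> (0 \<le> ell K w \<alpha> x C (real n)) = (T > c)) sequentially"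
    proof (cases "T > c")
      case True
      show ?thesis
      proof (rule always_eventually, intro allI impI)
        fix n :: nat assume "pC K C x = T"
        moreover have "0 \<le> w C * T + real n * (T - c)" using True wC T0 by simp
        ultimately show "(0 \<le> ell K w \<alpha> x C (real n)) = (T > c)"
          using True unfolding ell_def c_def by (simp add: algebra_simps)
      qed
    next
      case False
      then have lt: "T < c" using Tne unfolding T_def c_def by simp
      show ?thesis using eventually_real_gt[of "w C * T / (c - T)"]
      proof (rule eventually_mono)
        fix n assume "w C * T / (c - T) < real n"
        then have "w C * T < real n * (c - T)" using lt by (simp add: pos_divide_less_eq)
        then show "pC K C x = T \<longrightarrow> (0 \<le> ell K w \<alpha> x C (real n)) = (T > c)"
          using lt unfolding ell_def c_def by (auto simp: algebra_simps)
      qed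
    qed
  qed
  show ?thesis using ev1 ev2
  proof eventually_elim
    case (elim n)
    define C' where "C' = Cmu K Is w \<alpha> (real n) x"
    have C': "C' \<in> set Is" "ell K w \<alpha> x C' (real n) = Ux K Is w \<alpha> (real n) x"
      using Cmu_props[OF Isne, where K=K and w=w and \<alpha>=\<alpha> and x=x and \<mu>="real n"] unfolding C'_def by auto
    have ge: "ell K w \<alpha> x Cs (real n) \<le> ell K w \<alpha> x C' (real n)"
      using Ux_ge[OF Cs(1), where K=K and w=w and \<alpha>=\<alpha> and x=x and \<mu>="real n"] C' by simp
    have "pC K C' x \<le> T" using Tx_ge[OF C'(1)] unfolding T_def .
    then have pT: "pC K C' x = T" using elim(1) C'(1) ge by force
    have "Dmu K Is w \<alpha> (real n) x = (T > c)"
      unfolding Dmu_def using C' elim(2) pT by force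
    then show ?case unfolding hh_def C'_def[symmetric] using pT unfolding T_def c_def by simp
  qed
qed


lemma exists_neg: "\<exists>n::nat. integral\<^sup>L M (hh (real n)) < 0"
proof -
  define L where "L = (\<lambda>x. (1 - \<alpha> - Tx K Is x) * of_bool (Tx K Is x > 1 - \<alpha>))"
  have Lm[measurable]: "L \<in> borel_measurable M" unfolding L_def by measurable
  have AET: "AE x in M. Tx K Is x \<noteq> 1 - \<alpha>"
  proof -
    have "AE x in M. \<forall>C\<in>set Is. pC K C x \<noteq> 1 - \<alpha>"
      by (rule AE_finite_allI[OF finite_set]) (rule AE_ne[OF na1]; simp)
    then show ?thesis
      by (rule eventually_mono) (metis Tx_in)
  qed
  have lim: "(\<lambda>n. integral\<^sup>L M (hh (real n))) \<longlonglongrightarrow> integral\<^sup>L M L"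
  proof (rule integral_dominated_convergence[where w="\<lambda>_. 1"])
    show "AE x in M. (\<lambda>n. hh (real n) x) \<longlonglongrightarrow> L x"
      using AE_space AET
    proof eventually_elim
      case (elim x)
      then show ?case unfolding L_def by (intro tendsto_eventually hh_inf) auto
    qed
    show "\<And>n. AE x in M. norm (hh (real n) x) \<le> 1" using hh_bound by (intro AE_I2) auto
  qed auto
  have Lneg: "integral\<^sup>L M L < 0"
  proof -
    define f where "f = (\<lambda>x. - L x)"
    have fm[measurable]: "f \<in> borel_measurable M" unfolding f_def by measurable
    have fnn: "AE x in M. 0 \<le> f x" unfolding f_def L_def by (intro AE_I2) auto
    have fb: "norm (f x) \<le> 1" if x: "x \<in> space M" for x
    proof -
      obtain C where C: "C \<in> set Is" "pC K C x = Tx K Is x" using Tx_in[of x] by blast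
      have "0 \<le> Tx K Is x \<and> Tx K Is x \<le> 1" using pC_bounds[OF x, of C] C by simp
      then show ?thesis using alpha unfolding f_def L_def by auto
    qed
    have fint: "integrable M f" by (rule integrable_const_bound[where B=1]) (use fb in auto)
    have "integral\<^sup>L M f \<noteq> 0"
    proof
      assume "integral\<^sup>L M f = 0"
      then have "AE x in M. f x = 0" using integral_nonneg_eq_0_iff_AE[OF fint fnn] by simp
      then have "AE x in M. \<not> Tx K Is x > 1 - \<alpha>"
        by (rule eventually_mono) (auto simp: f_def L_def)
      moreover have "{x \<in> space M. Tx K Is x > 1 - \<alpha>} \<in> sets M" by measurable
      ultimately have "emeasure M {x \<in> space M. Tx K Is x > 1 - \<alpha>} = 0"
        using AE_iff_measurable[of "{x \<in> space M. Tx K Is x > 1 - \<alpha>}" M "\<lambda>x. \<not> Tx K Is x > 1 - \<alpha>"] by auto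
      then show False using posT by (simp add: emeasure_eq_measure)
    qed
    moreover have "0 \<le> integral\<^sup>L M f" by (rule integral_nonneg_AE[OF fnn])
    moreover have "integral\<^sup>L M f = - integral\<^sup>L M L" unfolding f_def by simp
    ultimately show ?thesis by simp
  qed
  from order_tendstoD(2)[OF lim Lneg] obtain n where "integral\<^sup>L M (hh (real n)) < 0"
    by (auto dest: eventually_happens)
  then show ?thesis by blast
qed


lemma adm_parts:
  assumes adm: "admissible M Is D C"
  shows "integrable M (\<lambda>x. w (C x) * pC K (C x) x * of_bool (D x))"
    and "integrable M (\<lambda>x. (1 - pC K (C x) x - \<alpha>) * of_bool (D x))"
proof -
  have Dm: "D \<in> M \<rightarrow>\<^sub>M count_space UNIV" and Cm: "C \<in> M \<rightarrow>\<^sub>M count_space UNIV"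
    and Cin: "\<And>x. x \<in> space M \<Longrightarrow> C x \<in> set Is"
    using adm unfolding admissible_def by auto
  have Cm2: "C \<in> M \<rightarrow>\<^sub>M count_space (set Is)"
  proof (subst measurable_count_space_eq2, simp, intro conjI ballI)
    show "C \<in> space M \<rightarrow> set Is" using Cin by auto
    fix a show "C -` {a} \<inter> space M \<in> sets M" using measurable_sets[OF Cm, of "{a}"] by simp
  qed
  have Dr[measurable]: "(\<lambda>x. of_bool (D x) :: real) \<in> borel_measurable M"
    by (rule measurable_comp[OF Dm, unfolded comp_def]) simp
  have m1: "(\<lambda>x. (\<lambda>i x. w i * pC K i x) (C x) x) \<in> borel_measurable M"
    by (rule measurable_compose_countable'[OF _ Cm2]) (auto simp: countable_finite)
  have m2: "(\<lambda>x. (\<lambda>i x. (1 - pC K i x - \<alpha>)) (C x) x) \<in> borel_measurable M"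
    by (rule measurable_compose_countable'[OF _ Cm2]) (auto simp: countable_finite)
  show "integrable M (\<lambda>x. w (C x) * pC K (C x) x * of_bool (D x))"
  proof (rule integrable_const_bound[where B=B])
    show "AE x in M. norm (w (C x) * pC K (C x) x * of_bool (D x)) \<le> B"
    proof (rule AE_I2)
      fix x assume x: "x \<in> space M"
      have "0 < w (C x)" "w (C x) < B" using wb[OF Cin[OF x]] by auto
      moreover have "0 \<le> pC K (C x) x" "pC K (C x) x \<le> 1" using pC_bounds[OF x] by auto
      ultimately have "w (C x) * pC K (C x) x \<le> B * 1" by (intro mult_mono) auto
      then show "norm (w (C x) * pC K (C x) x * of_bool (D x)) \<le> B"
        using \<open>0 \<le> pC K (C x) x\<close> \<open>0 < w (C x)\<close> \<open>w (C x) < B\<close> by auto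
    qed
    show "(\<lambda>x. w (C x) * pC K (C x) x * of_bool (D x)) \<in> borel_measurable M"
      using m1 by measurable
  qed
  show "integrable M (\<lambda>x. (1 - pC K (C x) x - \<alpha>) * of_bool (D x))"
  proof (rule integrable_const_bound[where B=1])
    show "AE x in M. norm ((1 - pC K (C x) x - \<alpha>) * of_bool (D x)) \<le> 1"
    proof (rule AE_I2)
      fix x assume x: "x \<in> space M"
      show "norm ((1 - pC K (C x) x - \<alpha>) * of_bool (D x)) \<le> 1"
        using pC_bounds[OF x, of "C x"] alpha by auto
    qed
    show "(\<lambda>x. (1 - pC K (C x) x - \<alpha>) * of_bool (D x)) \<in> borel_measurable M"
      using m2 by measurable
  qed
qed

lemma lagr:
  assumes adm: "admissible M Is D C"
  shows "integrable M (\<lambda>x. ell K w \<alpha> x (C x) \<mu> * of_bool (D x))"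
    and "integral\<^sup>L M (\<lambda>x. ell K w \<alpha> x (C x) \<mu> * of_bool (D x)) = Pi_obj M K w D C - \<mu> * G_con M K \<alpha> D C"
proof -
  have eq: "(\<lambda>x. ell K w \<alpha> x (C x) \<mu> * of_bool (D x)) =
    (\<lambda>x. w (C x) * pC K (C x) x * of_bool (D x) - \<mu> * ((1 - pC K (C x) x - \<alpha>) * of_bool (D x)))"
    by (rule ext) (simp add: ell_def algebra_simps)
  show "integrable M (\<lambda>x. ell K w \<alpha> x (C x) \<mu> * of_bool (D x))"
    unfolding eq using adm_parts[OF adm] by auto
  show "integral\<^sup>L M (\<lambda>x. ell K w \<alpha> x (C x) \<mu> * of_bool (D x)) = Pi_obj M K w D C - \<mu> * G_con M K \<alpha> D C"
    unfolding eq Pi_obj_def G_con_def using adm_parts[OF adm] by simp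
qed

lemma adm_mu: "admissible M Is (Dmu K Is w \<alpha> \<mu>) (Cmu K Is w \<alpha> \<mu>)"
  unfolding admissible_def using Dmu_meas2 Cmu_meas Cmu_props[OF Isne, where K=K and w=w and \<alpha>=\<alpha> and \<mu>=\<mu>] by blast

lemma pointwise:
  assumes "C x \<in> set Is"
  shows "ell K w \<alpha> x (C x) \<mu> * of_bool (D x) \<le> ell K w \<alpha> x (Cmu K Is w \<alpha> \<mu> x) \<mu> * of_bool (Dmu K Is w \<alpha> \<mu> x)"
  using Ux_ge[OF assms, where K=K and w=w and \<alpha>=\<alpha> and x=x and \<mu>=\<mu>]
    Cmu_props[OF Isne, where K=K and w=w and \<alpha>=\<alpha> and x=x and \<mu>=\<mu>]
  unfolding Dmu_def by auto

lemma main: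
  shows "\<exists>\<mu>s::real. \<mu>s \<ge> 0
           \<and> G_con M K \<alpha> (Dmu K Is w \<alpha> \<mu>s) (Cmu K Is w \<alpha> \<mu>s) \<le> 0
           \<and> (\<forall>\<mu>\<ge>0. G_con M K \<alpha> (Dmu K Is w \<alpha> \<mu>) (Cmu K Is w \<alpha> \<mu>) \<le> 0 \<longrightarrow> \<mu>s \<le> \<mu>)
           \<and> admissible M Is (Dmu K Is w \<alpha> \<mu>s) (Cmu K Is w \<alpha> \<mu>s)
           \<and> (\<forall>D C. admissible M Is D C \<and> G_con M K \<alpha> D C \<le> 0 \<longrightarrow>
                 Pi_obj M K w D C \<le> Pi_obj M K w (Dmu K Is w \<alpha> \<mu>s) (Cmu K Is w \<alpha> \<mu>s))"
proof -
  define g where "g = (\<lambda>\<mu>. integral\<^sup>L M (hh \<mu>))"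
  define S where "S = {0..} \<inter> g -` {..0}"
  have cont: "continuous_on {0..} g" unfolding g_def
    by (intro continuous_at_imp_continuous_on ballI g_cont) auto
  have closedS: "closed S" unfolding S_def by (rule continuous_closed_preimage[OF cont]) auto
  obtain n :: nat where "g (real n) < 0" using exists_neg unfolding g_def by blast
  then have "real n \<in> S" unfolding S_def by auto
  then have neS: "S \<noteq> {}" by auto
  have bdd: "bdd_below S" unfolding S_def by (intro bdd_belowI[of _ 0]) auto
  define \<mu>s where "\<mu>s = Inf S"
  have "\<mu>s \<in> S" using closure_contains_Inf[OF neS bdd] closedS unfolding \<mu>s_def by (simp add: closure_closed)
  then have mus0: "0 \<le> \<mu>s" and gmus: "g \<mu>s \<le> 0" unfolding S_def by auto
  have minimal: "\<mu>s \<le> \<mu>" if "0 \<le> \<mu>" "g \<mu> \<le> 0" for \<mu>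
    unfolding \<mu>s_def using that bdd by (intro cInf_lower) (auto simp: S_def)
  have slack: "\<mu>s * g \<mu>s = 0"
  proof (cases "\<mu>s = 0")
    case False
    then have pos: "0 < \<mu>s" using mus0 by simp
    have "(g \<longlongrightarrow> g \<mu>s) (at \<mu>s)" using g_cont[OF mus0] unfolding g_def isCont_def by simp
    then have lim: "(g \<longlongrightarrow> g \<mu>s) (at_left \<mu>s)" using filterlim_at_split by blast
    have "eventually (\<lambda>\<mu>. 0 \<le> g \<mu>) (at_left \<mu>s)"
      using eventually_at_left_real[OF pos]
    proof (rule eventually_mono)
      fix \<mu> assume "\<mu> \<in> {0<..<\<mu>s}"
      then show "0 \<le> g \<mu>" using minimal[of \<mu>] by force
    qed
    from tendsto_lowerbound[OF lim this] have "0 \<le> g \<mu>s" by simp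
    then show ?thesis using gmus by simp
  qed simp
  show ?thesis
  proof (intro exI[of _ \<mu>s] conjI allI impI)
    show "0 \<le> \<mu>s" by fact
    show "G_con M K \<alpha> (Dmu K Is w \<alpha> \<mu>s) (Cmu K Is w \<alpha> \<mu>s) \<le> 0" using gmus unfolding G_hh g_def .
    show "\<mu>s \<le> \<mu>" if "0 \<le> \<mu>" "G_con M K \<alpha> (Dmu K Is w \<alpha> \<mu>) (Cmu K Is w \<alpha> \<mu>) \<le> 0" for \<mu>
      using minimal that unfolding G_hh g_def by blast
    show "admissible M Is (Dmu K Is w \<alpha> \<mu>s) (Cmu K Is w \<alpha> \<mu>s)" by (rule adm_mu)
    fix D C assume DC: "admissible M Is D C \<and> G_con M K \<alpha> D C \<le> 0"
    then have adm: "admissible M Is D C" and G0: "G_con M K \<alpha> D C \<le> 0" by auto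
    have "Pi_obj M K w D C \<le> Pi_obj M K w D C - \<mu>s * G_con M K \<alpha> D C"
      using mus0 G0 by (simp add: mult_nonneg_nonpos)
    also have "\<dots> = integral\<^sup>L M (\<lambda>x. ell K w \<alpha> x (C x) \<mu>s * of_bool (D x))"
      using lagr(2)[OF adm] by simp
    also have "\<dots> \<le> integral\<^sup>L M (\<lambda>x. ell K w \<alpha> x (Cmu K Is w \<alpha> \<mu>s x) \<mu>s * of_bool (Dmu K Is w \<alpha> \<mu>s x))"
    proof (rule integral_mono_AE)
      show "integrable M (\<lambda>x. ell K w \<alpha> x (C x) \<mu>s * of_bool (D x))" by (rule lagr(1)[OF adm])
      show "integrable M (\<lambda>x. ell K w \<alpha> x (Cmu K Is w \<alpha> \<mu>s x) \<mu>s * of_bool (Dmu K Is w \<alpha> \<mu>s x))"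
        by (rule lagr(1)[OF adm_mu])
      show "AE x in M. ell K w \<alpha> x (C x) \<mu>s * of_bool (D x)
          \<le> ell K w \<alpha> x (Cmu K Is w \<alpha> \<mu>s x) \<mu>s * of_bool (Dmu K Is w \<alpha> \<mu>s x)"
        using adm unfolding admissible_def by (intro AE_I2 pointwise) auto
    qed
    also have "\<dots> = Pi_obj M K w (Dmu K Is w \<alpha> \<mu>s) (Cmu K Is w \<alpha> \<mu>s) - \<mu>s * g \<mu>s"
      using lagr(2)[OF adm_mu] unfolding g_def G_hh by simp
    also have "\<dots> = Pi_obj M K w (Dmu K Is w \<alpha> \<mu>s) (Cmu K Is w \<alpha> \<mu>s)" using slack by simp
    finally show "Pi_obj M K w D C \<le> Pi_obj M K w (Dmu K Is w \<alpha> \<mu>s) (Cmu K Is w \<alpha> \<mu>s)" .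
  qed
qed

end

theorem theorem1:
  fixes M :: "'x measure" and N :: "'y measure" and K :: "'x \<Rightarrow> 'y measure"
    and Is :: "'y set list" and w :: "'y set \<Rightarrow> real" and B \<alpha> :: real
  assumes "prob_space M"
    and "K \<in> M \<rightarrow>\<^sub>M prob_algebra N"
    and "\<alpha> \<in> {0<..<1}"
    and "Is \<noteq> []" and "distinct Is" and "set Is \<subseteq> sets N"
    and "\<And>C. C \<in> set Is \<Longrightarrow> 0 < w C \<and> w C < B"
    and "measure M {x \<in> space M. Tx K Is x > 1 - \<alpha>} > 0"
    and "nonatomic M"
    and "\<And>C. C \<in> set Is \<Longrightarrow> nonatomic_rv M (pC K C)"
    and "\<And>C1 C2 a b. C1 \<in> set Is \<Longrightarrow> C2 \<in> set Is \<Longrightarrow> C1 \<noteq> C2 \<Longrightarrow> (a, b) \<noteq> (0, 0) \<Longrightarrow>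
           nonatomic_rv M (\<lambda>x. a * pC K C1 x + b * pC K C2 x)"
  shows "\<exists>\<mu>s::real. \<mu>s \<ge> 0
           \<and> G_con M K \<alpha> (Dmu K Is w \<alpha> \<mu>s) (Cmu K Is w \<alpha> \<mu>s) \<le> 0
           \<and> (\<forall>\<mu>\<ge>0. G_con M K \<alpha> (Dmu K Is w \<alpha> \<mu>) (Cmu K Is w \<alpha> \<mu>) \<le> 0 \<longrightarrow> \<mu>s \<le> \<mu>)
           \<and> admissible M Is (Dmu K Is w \<alpha> \<mu>s) (Cmu K Is w \<alpha> \<mu>s)
           \<and> (\<forall>D C. admissible M Is D C \<and> G_con M K \<alpha> D C \<le> 0 \<longrightarrow>
                 Pi_obj M K w D C \<le> Pi_obj M K w (Dmu K Is w \<alpha> \<mu>s) (Cmu K Is w \<alpha> \<mu>s))"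
proof -
  interpret setting M N K Is w B \<alpha>
    by (rule setting.intro[OF assms(1) assms(2) assms(3) assms(4) assms(6) assms(7) assms(10) assms(11) assms(8)])
  show ?thesis by (rule main)
qed

end
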